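(* Let $\mathcal U$ be a non-principal ultrafilter on $\mathbb N$ and let $\mathcal A$ be a unital Banach algebra which is not isomorphic to $\mathbb C$. Then the following are equivalent: (1) the ultrapower $(\mathcal A)_{\mathcal U}$ is purely infinite; (2) there is $K>0$ such that $C_{\mathrm{pi}}^{\mathcal A}(a)<K$ for every $a\in\mathcal A$ with $\|a\|=1$.
   Context: A complex unital algebra $\mathcal B$ is purely infinite if it is not a division algebra and for every non-zero $a\in\mathcal B$ there exist $b,c\in\mathcal B$ with $bac=1_{\mathcal B}$. For a unital Banach algebra $\mathcal A$ and non-zero $a\in\mathcal A$, $C_{\mathrm{pi}}^{\mathcal A}(a)=\inf\{\|b\|\|c\|: b,c\in\mathcal A,\ bac=1\}$, with $C_{\mathrm{pi}}^{\mathcal A}(a)=\infty$ if no such $b,c$ exist. For an ultrafilter $\mathcal U$ on $\mathbb N$, the ultrapower is $(\mathcal A)_{\mathcal U}=\ell^\infty(\mathcal A)/c_{\mathcal U}(\mathcal A)$, where $\ell^\infty(\mathcal A)$ is the Banach algebra of bounded sequences in $\mathcal A$ with pointwise operations and sup norm, and $c_{\mathcal U}(\mathcal A)$ is the closed ideal of sequences $(a_n)$ with $\lim_{n\to\mathcal U}\|a_n\|=0$; the quotient norm satisfies $\|\pi((a_n))\|=\lim_{n\to\mathcal U}\|a_n\|$. *)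

theory Defs
  imports "HOL-Analysis.Analysis" "HOL-Library.Extended_Real"
begin

definition ultrafilter_nat :: "nat filter \<Rightarrow> bool" where
  "ultrafilter_nat U \<longleftrightarrow> U \<noteq> bot \<and> (\<forall>P. eventually P U \<or> eventually (\<lambda>n. \<not> P n) U)"

definition nonprincipal :: "nat filter \<Rightarrow> bool" where
  "nonprincipal U \<longleftrightarrow> (\<forall>k. \<not> eventually (\<lambda>n. n = k) U)"

text \<open>The underlying type carries the real Banach algebra structure with unit of norm 1
  (class real_normed_algebra_1 and banach); cmult is the complex scalar multiplication,
  compatible with the real one, with the algebra structure and with the norm.\<close>

definition complex_banach_algebra :: "(complex \<Rightarrow> 'a::{real_normed_algebra_1,banach} \<Rightarrow> 'a) \<Rightarrow> bool" where
  "complex_banach_algebra cmult \<longleftrightarrow>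
     (\<forall>r x. cmult (complex_of_real r) x = scaleR r x) \<and>
     (\<forall>x. cmult 1 x = x) \<and>
     (\<forall>z w x. cmult (z * w) x = cmult z (cmult w x)) \<and>
     (\<forall>z w x. cmult (z + w) x = cmult z x + cmult w x) \<and>
     (\<forall>z x y. cmult z (x + y) = cmult z x + cmult z y) \<and>
     (\<forall>z x y. cmult z (x * y) = cmult z x * y) \<and>
     (\<forall>z x y. cmult z (x * y) = x * cmult z y) \<and>
     (\<forall>z x. norm (cmult z x) = cmod z * norm x)"

definition iso_to_complex :: "(complex \<Rightarrow> 'a::{real_normed_algebra_1,banach} \<Rightarrow> 'a) \<Rightarrow> bool" where
  "iso_to_complex cmult \<longleftrightarrow>
     (\<exists>\<phi> :: 'a \<Rightarrow> complex. bij \<phi> \<and>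
        (\<forall>x y. \<phi> (x + y) = \<phi> x + \<phi> y) \<and>
        (\<forall>z x. \<phi> (cmult z x) = z * \<phi> x) \<and>
        (\<forall>x y. \<phi> (x * y) = \<phi> x * \<phi> y) \<and>
        \<phi> 1 = 1)"

definition C_pi :: "'a::real_normed_algebra_1 \<Rightarrow> ereal" where
  "C_pi a = (INF bc \<in> {(b, c). b * a * c = 1}. ereal (norm (fst bc) * norm (snd bc)))"
  \<comment> \<open>the infimum of the empty set of extended reals is \<infinity>\<close>

text \<open>The ultrapower is the quotient algebra; its elements are
  represented by bounded sequences, and x = y in the quotient iff x - y is in c_U(A).\<close>

definition linf :: "(nat \<Rightarrow> 'a::real_normed_vector) set" where
  "linf = {f. bounded (range f)}"

definition cU :: "nat filter \<Rightarrow> (nat \<Rightarrow> 'a::real_normed_vector) set" where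
  "cU U = {f \<in> linf. ((\<lambda>n. norm (f n)) \<longlongrightarrow> 0) U}"

text \<open>Purely infinite for the quotient algebra ell^infinity(A) / c_U(A):
  it is not a division algebra (a division algebra being a nonzero unital algebra in which
  every nonzero element is invertible), and every nonzero element a admits b, c with b a c = 1.\<close>

definition ultrapower_division_algebra :: "nat filter \<Rightarrow> 'a::real_normed_algebra_1 itself \<Rightarrow> bool" where
  "ultrapower_division_algebra U _ \<longleftrightarrow>
     (\<lambda>n. 1 :: 'a) \<notin> cU U \<and>
     (\<forall>a \<in> (linf :: (nat \<Rightarrow> 'a) set). a \<notin> cU U \<longrightarrow>
        (\<exists>b \<in> linf. (\<lambda>n. a n * b n - 1) \<in> cU U \<and> (\<lambda>n. b n * a n - 1) \<in> cU U))"

definition ultrapower_purely_infinite :: "nat filter \<Rightarrow> 'a::real_normed_algebra_1 itself \<Rightarrow> bool" where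
  "ultrapower_purely_infinite U T \<longleftrightarrow>
     \<not> ultrapower_division_algebra U T \<and>
     (\<forall>a \<in> (linf :: (nat \<Rightarrow> 'a) set). a \<notin> cU U \<longrightarrow>
        (\<exists>b \<in> linf. \<exists>c \<in> linf. (\<lambda>n. b n * a n * c n - 1) \<in> cU U))"

end

theory Submission
  imports Defs
begin


lemma neumann:
  fixes u :: "'a::{real_normed_algebra_1,banach}"
  assumes "norm u < 1"
  shows "\<exists>w. w * (1 - u) = 1 \<and> (1 - u) * w = 1 \<and> norm w \<le> 1 / (1 - norm u)"
proof -
  have sn: "summable (\<lambda>k. norm u ^ k)" using assms by (simp add: summable_geometric)
  have le: "norm (u ^ k) \<le> norm u ^ k" for k by (rule norm_power_ineq)
  have s: "summable (\<lambda>k. u ^ k)"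
    by (rule summable_comparison_test[OF _ sn]) (auto intro: le)
  define w where "w = (\<Sum>k. u ^ k)"
  have lim: "(\<lambda>N. \<Sum>k<N. u ^ k) \<longlonglongrightarrow> w" using s unfolding w_def by (simp add: summable_LIMSEQ)
  have p0: "(\<lambda>N. u ^ N) \<longlonglongrightarrow> 0"
  proof -
    have "(\<lambda>N. norm u ^ N) \<longlonglongrightarrow> 0" using assms by (simp add: LIMSEQ_power_zero)
    then show ?thesis
      by (rule Lim_null_comparison[rotated]) (rule always_eventually, simp add: le)
  qed
  have e1: "(\<Sum>k<N. u ^ k) * (1 - u) = 1 - u ^ N" for N
  proof (induction N)
    case (Suc N)
    have "(\<Sum>k<Suc N. u ^ k) * (1 - u) = (\<Sum>k<N. u ^ k) * (1 - u) + u ^ N * (1 - u)"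
      by (simp add: distrib_right)
    also have "\<dots> = 1 - u ^ N + (u ^ N - u ^ N * u)" using Suc by (simp add: right_diff_distrib)
    also have "\<dots> = 1 - u ^ Suc N" by (simp add: power_Suc2 power_commutes)
    finally show ?case .
  qed simp
  have e2: "(1 - u) * (\<Sum>k<N. u ^ k) = 1 - u ^ N" for N
  proof (induction N)
    case (Suc N)
    have "(1 - u) * (\<Sum>k<Suc N. u ^ k) = (1 - u) * (\<Sum>k<N. u ^ k) + (1 - u) * u ^ N"
      by (simp add: distrib_left)
    also have "\<dots> = 1 - u ^ N + (u ^ N - u * u ^ N)" using Suc by (simp add: left_diff_distrib)
    also have "\<dots> = 1 - u ^ Suc N" by (simp add: power_Suc)
    finally show ?case .
  qed simp
  have "(\<lambda>N. (\<Sum>k<N. u ^ k) * (1 - u)) \<longlonglongrightarrow> w * (1 - u)"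
    by (intro tendsto_intros lim)
  moreover have "(\<lambda>N. (\<Sum>k<N. u ^ k) * (1 - u)) \<longlonglongrightarrow> 1"
    unfolding e1 using tendsto_diff[OF tendsto_const p0] by simp
  ultimately have 1: "w * (1 - u) = 1" using LIMSEQ_unique by blast
  have "(\<lambda>N. (1 - u) * (\<Sum>k<N. u ^ k)) \<longlonglongrightarrow> (1 - u) * w"
    by (intro tendsto_intros lim)
  moreover have "(\<lambda>N. (1 - u) * (\<Sum>k<N. u ^ k)) \<longlonglongrightarrow> 1"
    unfolding e2 using tendsto_diff[OF tendsto_const p0] by simp
  ultimately have 2: "(1 - u) * w = 1" using LIMSEQ_unique by blast
  have sn': "summable (\<lambda>k. norm (u ^ k))"
    by (rule summable_comparison_test[OF _ sn]) (auto intro: le)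
  have "norm w \<le> (\<Sum>k. norm (u ^ k))" unfolding w_def by (rule summable_norm[OF sn'])
  also have "\<dots> \<le> (\<Sum>k. norm u ^ k)" by (rule suminf_le[OF le sn' sn])
  also have "\<dots> = 1 / (1 - norm u)" using assms by (simp add: suminf_geometric)
  finally show ?thesis using 1 2 by blast
qed

lemma neumann':
  fixes z :: "'a::{real_normed_algebra_1,banach}"
  assumes "norm (z - 1) < 1"
  shows "\<exists>w. w * z = 1 \<and> z * w = 1 \<and> norm w \<le> 1 / (1 - norm (z - 1))"
proof -
  have "norm (1 - z) < 1" using assms by (simp add: norm_minus_commute)
  from neumann[OF this] show ?thesis by (simp add: norm_minus_commute)
qed



context
  fixes cmult :: "complex \<Rightarrow> 'a::{real_normed_algebra_1,banach} \<Rightarrow> 'a"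
  assumes cb: "complex_banach_algebra cmult"
begin

lemma cm_real: "cmult (complex_of_real r) x = scaleR r x" using cb unfolding complex_banach_algebra_def by blast
lemma cm_one: "cmult 1 x = x" using cb unfolding complex_banach_algebra_def by blast
lemma cm_assoc: "cmult (z * w) x = cmult z (cmult w x)" using cb unfolding complex_banach_algebra_def by blast
lemma cm_addl: "cmult (z + w) x = cmult z x + cmult w x" using cb unfolding complex_banach_algebra_def by blast
lemma cm_addr: "cmult z (x + y) = cmult z x + cmult z y" using cb unfolding complex_banach_algebra_def by blast
lemma cm_multl: "cmult z (x * y) = cmult z x * y" using cb unfolding complex_banach_algebra_def by blast
lemma cm_multr: "cmult z (x * y) = x * cmult z y" using cb unfolding complex_banach_algebra_def by blast
lemma cm_norm: "norm (cmult z x) = cmod z * norm x" using cb unfolding complex_banach_algebra_def by blast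

lemma cm_zero: "cmult 0 x = 0" using cm_real[of 0 x] by simp
lemma cm_zero_r: "cmult z 0 = 0" using cm_norm[of z 0] by simp
lemma cm_neg: "cmult (- z) x = - cmult z x"
proof -
  have "cmult z x + cmult (-z) x = 0" using cm_addl[of z "-z" x] by (simp add: cm_zero)
  then show ?thesis by (rule minus_unique[symmetric])
qed
lemma cm_diffl: "cmult (z - w) x = cmult z x - cmult w x"
  using cm_addl[of z "-w" x] by (simp add: cm_neg)
lemma cm_diffr: "cmult z (x - y) = cmult z x - cmult z y"
  using cm_addr[of z "x - y" y] by (simp add: algebra_simps)
lemma cm_1l: "cmult z 1 * y = cmult z y" using cm_multl[of z 1 y] by simp
lemma cm_1r: "y * cmult z 1 = cmult z y" using cm_multr[of z y 1] by simp
lemma cm_nat: "cmult (of_nat n) x = of_nat n * x"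
  using cm_real[of "real n" x] by (simp add: scaleR_conv_of_real)
lemma cm_suml: "cmult (\<Sum>j\<in>A. f j) x = (\<Sum>j\<in>A. cmult (f j) x)"
  by (induction A rule: infinite_finite_induct) (auto simp: cm_zero cm_addl)
lemma cm_sumr: "cmult z (\<Sum>j\<in>A. f j) = (\<Sum>j\<in>A. cmult z (f j))"
  by (induction A rule: infinite_finite_induct) (auto simp: cm_zero_r cm_addr)

lemma GM:
  assumes inv: "\<And>x::'a. x \<noteq> 0 \<Longrightarrow> \<exists>y. y * x = 1 \<and> x * y = 1"
  shows "\<exists>c. x = cmult c 1"
proof (rule ccontr)
  assume nx: "\<nexists>c. x = cmult c 1"
  define y where "y c = x - cmult c 1" for c
  have ynz: "y c \<noteq> 0" for c using nx unfolding y_def by auto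
  define R where "R c = (SOME r. r * y c = 1 \<and> y c * r = 1)" for c
  have RLR: "R c * y c = 1 \<and> y c * R c = 1" for c
    unfolding R_def by (rule someI_ex) (rule inv[OF ynz])
  have RL: "R c * y c = 1" and RR: "y c * R c = 1" for c using RLR by auto
  have Rnz: "R c \<noteq> 0" for c using RL[of c] by auto
  have resolv: "R a - R b = cmult (a - b) (R a * R b)" for a b
  proof -
    have "R a = R a * y b * R b" using RR[of b] by (simp add: mult.assoc)
    moreover have "R b = R a * y a * R b" using RL[of a] by simp
    ultimately have "R a - R b = R a * (y b - y a) * R b" by (simp add: algebra_simps)
    also have "y b - y a = cmult (a - b) 1" unfolding y_def by (simp add: cm_diffl)
    also have "R a * cmult (a - b) 1 * R b = cmult (a - b) (R a * R b)"
      by (simp add: cm_1r cm_multl)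
    finally show ?thesis .
  qed
  have step: "R (m + l) = R m + cmult l (R m * R (m + l))" for m l
    using resolv[of m "m + l"] by (simp add: cm_neg algebra_simps)
  have iter: "R (m + l) = (\<Sum>k<N. cmult (l ^ k) (R m ^ Suc k)) + cmult (l ^ N) (R m ^ N * R (m + l))"
    for m l N
  proof (induction N)
    case 0 then show ?case by (simp add: cm_one)
  next
    case (Suc N)
    have "R m ^ N * R (m + l) = R m ^ N * (R m + cmult l (R m * R (m + l)))"
      by (rule arg_cong[where f="\<lambda>z. R m ^ N * z"]) (rule step)
    also have "\<dots> = R m ^ N * R m + cmult l (R m ^ N * (R m * R (m + l)))"
      by (simp add: distrib_left cm_multr[symmetric])
    also have "\<dots> = R m ^ Suc N + cmult l (R m ^ Suc N * R (m + l))"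
      by (simp only: power_Suc2 mult.assoc)
    finally have eqN: "R m ^ N * R (m + l) = R m ^ Suc N + cmult l (R m ^ Suc N * R (m + l))" .
    have "cmult (l ^ N) (R m ^ N * R (m + l)) =
        cmult (l ^ N) (R m ^ Suc N) + cmult (l ^ Suc N) (R m ^ Suc N * R (m + l))"
      unfolding eqN cm_addr cm_assoc[symmetric] power_Suc2 by (rule refl)
    with Suc show ?case by (simp add: add.assoc)
  qed
  have bnd1: "norm (R (m + l)) \<le> norm (R m) + cmod l * norm (R m) * norm (R (m + l))" for m l
  proof -
    have "norm (R (m + l)) \<le> norm (R m) + norm (cmult l (R m * R (m + l)))"
      by (subst step) (rule norm_triangle_ineq)
    also have "norm (cmult l (R m * R (m + l))) \<le> cmod l * (norm (R m) * norm (R (m + l)))"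
      unfolding cm_norm by (rule mult_left_mono[OF norm_mult_ineq]) simp
    finally show ?thesis by (simp add: mult.assoc)
  qed
  have bnd2: "norm (R (m + l)) \<le> norm (R m) / (1 - cmod l * norm (R m))"
    if "cmod l * norm (R m) < 1" for m l
  proof -
    have "norm (R (m + l)) * (1 - cmod l * norm (R m)) \<le> norm (R m)"
      using bnd1[of m l] by (simp add: algebra_simps)
    then show ?thesis using that by (simp add: pos_le_divide_eq)
  qed
  have dif: "norm (R (m + l) - R m) \<le> cmod l * norm (R m) * norm (R (m + l))" for m l
  proof -
    have "R (m + l) - R m = cmult l (R m * R (m + l))" using step[of m l] by (simp add: algebra_simps)
    then have "norm (R (m + l) - R m) = cmod l * norm (R m * R (m + l))" by (simp add: cm_norm)
    also have "\<dots> \<le> cmod l * (norm (R m) * norm (R (m + l)))"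
      by (rule mult_left_mono[OF norm_mult_ineq]) simp
    finally show ?thesis by (simp add: mult.assoc)
  qed
  have cont: "isCont R m" for m
  proof -
    define M where "M = norm (R m)"
    have Mpos: "M > 0" using Rnz unfolding M_def by simp
    have ev: "eventually (\<lambda>h. norm (R (m + h) - R m) \<le> cmod h * (2 * M * M)) (at 0)"
      unfolding eventually_at ball_UNIV
    proof (intro exI[of _ "1 / (2 * M)"] conjI allI impI)
      show "1 / (2 * M) > 0" using Mpos by simp
      fix h :: complex assume "h \<noteq> 0 \<and> dist h 0 < 1 / (2 * M)"
      then have h: "cmod h * M < 1 / 2" using Mpos by (simp add: field_simps)
      have "norm (R (m + h)) \<le> M / (1 - cmod h * M)" using bnd2[of h m] h unfolding M_def by simp
      also have "\<dots> \<le> 2 * M" using h Mpos by (simp add: field_simps)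
      finally have b: "norm (R (m + h)) \<le> 2 * M" .
      have "norm (R (m + h) - R m) \<le> cmod h * M * norm (R (m + h))" using dif[of m h] unfolding M_def .
      also have "\<dots> \<le> cmod h * M * (2 * M)"
        by (rule mult_left_mono[OF b]) (use Mpos in simp)
      finally show "norm (R (m + h) - R m) \<le> cmod h * (2 * M * M)" by (simp add: algebra_simps)
    qed
    have "((\<lambda>h. cmod h * (2 * M * M)) \<longlongrightarrow> 0) (at 0)"
      by (rule tendsto_eq_intros) (auto intro!: tendsto_eq_intros)
    from Lim_null_comparison[OF ev this] have "((\<lambda>h. R (m + h) - R m) \<longlongrightarrow> 0) (at 0)" .
    then have "((\<lambda>h. R (m + h)) \<longlongrightarrow> R m) (at 0)" by (rule LIM_zero_cancel)
    then show ?thesis by (simp add: isCont_iff)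
  qed
  have decay: "norm (R c) \<le> 1 / (cmod c - norm x)" if "cmod c > norm x" for c
  proof -
    have "R c * x - cmult c (R c) = 1" using RL[of c] unfolding y_def by (simp add: right_diff_distrib cm_1r)
    then have "cmult c (R c) = R c * x - 1" by (simp add: algebra_simps)
    then have "cmod c * norm (R c) = norm (R c * x - 1)" by (metis cm_norm)
    also have "\<dots> \<le> norm (R c) * norm x + 1"
      using norm_triangle_ineq4[of "R c * x" 1] norm_mult_ineq[of "R c" x] by simp
    finally have "norm (R c) * (cmod c - norm x) \<le> 1" by (simp add: algebra_simps)
    then show ?thesis using that by (simp add: pos_le_divide_eq)
  qed
  define \<rho> where "\<rho> = norm x + 1 / norm (R 0) + 1"
  have rho0: "\<rho> \<ge> 0" unfolding \<rho>_def by (simp add: add_nonneg_nonneg)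
  have "\<exists>\<mu>\<in>cball 0 \<rho>. \<forall>c\<in>cball 0 \<rho>. norm (R c) \<le> norm (R \<mu>)"
    by (rule continuous_attains_sup) (use rho0 in \<open>auto intro!: continuous_at_imp_continuous_on isCont_norm cont\<close>)
  then obtain \<mu> where mu0: "\<forall>c\<in>cball 0 \<rho>. norm (R c) \<le> norm (R \<mu>)" by blast
  have mu: "\<And>c. cmod c \<le> \<rho> \<Longrightarrow> norm (R c) \<le> norm (R \<mu>)" using mu0 by (simp add: mem_cball_0)
  define M where "M = norm (R \<mu>)"
  have R0pos: "norm (R 0) > 0" using Rnz by simp
  have R0M: "norm (R 0) \<le> M" unfolding M_def using mu[of 0] R0pos by (simp add: \<rho>_def)
  have Mpos: "M > 0" using R0pos R0M by linarith
  have Mmax: "norm (R c) \<le> M" for c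
  proof (cases "cmod c \<le> \<rho>")
    case True then show ?thesis using mu unfolding M_def by blast
  next
    case False
    then have c1: "cmod c - norm x > 1 / norm (R 0)" unfolding \<rho>_def by simp
    have "0 < 1 / norm (R 0)" using R0pos by simp
    then have "norm (R c) \<le> 1 / (cmod c - norm x)" using c1 by (intro decay) linarith
    also have "\<dots> \<le> norm (R 0)"
    proof -
      have d0: "cmod c - norm x > 0" using c1 \<open>0 < 1 / norm (R 0)\<close> by linarith
      have "1 < norm (R 0) * (cmod c - norm x)" using c1 R0pos by (simp add: divide_less_eq mult.commute)
      then show ?thesis using d0 by (simp add: divide_le_eq mult.commute)
    qed
    finally show ?thesis using R0M by simp
  qed
  have key: "norm (R (m + l)) = M" if hm: "norm (R m) = M" and hl: "cmod l * M < 1" for m l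
  proof (rule ccontr)
    assume ne: "norm (R (m + l)) \<noteq> M"
    then have lt: "norm (R (m + l)) < M" using Mmax[of "m + l"] by simp
    define q where "q = cmod l * M"
    have q0: "q \<ge> 0" and q1: "q < 1" using hl Mpos unfolding q_def by auto
    have "(\<lambda>n. of_nat n * q ^ n) \<longlonglongrightarrow> 0" by (rule powser_times_n_limit_0) (use q0 q1 in simp)
    then have "eventually (\<lambda>n. of_nat n * q ^ n < (M - norm (R (m + l))) / M) sequentially"
      by (rule order_tendstoD) (use lt Mpos in simp)
    then obtain N where "\<forall>n\<ge>N. of_nat n * q ^ n < (M - norm (R (m + l))) / M"
      by (auto simp: eventually_sequentially)
    then obtain n where n1: "n \<ge> 1" and nq: "of_nat n * q ^ n < (M - norm (R (m + l))) / M"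
      by (metis le_add2 le_add_same_cancel2 nat_le_linear)
    have nq': "of_nat n * q ^ n * M < M - norm (R (m + l))" using nq Mpos by (simp add: pos_less_divide_eq)
    define \<omega> where "\<omega> = exp (2 * of_real pi * \<i> / of_nat n)"
    have wk: "\<omega> ^ k = exp (2 * of_real pi * \<i> * of_nat k / of_nat n)" for k
      unfolding \<omega>_def exp_of_nat_mult[symmetric] by (simp add: field_simps)
    have wn: "\<omega> ^ n = 1" using wk[of n] n1 by simp
    have wk1: "\<omega> ^ k \<noteq> 1" if "0 < k" "k < n" for k
      using complex_root_unity_eq_1[of n k] wk[of k] n1 that by (auto dest: dvd_imp_le)
    have nw: "cmod \<omega> = 1" unfolding \<omega>_def by (simp add: norm_exp_eq_Re)
    define lj where "lj j = \<omega> ^ j * l" for j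
    have nlj: "cmod (lj j) = cmod l" for j unfolding lj_def by (simp add: norm_mult norm_power nw)
    have ljn: "lj j ^ n = l ^ n" for j
    proof -
      have "(\<omega> ^ j) ^ n = (\<omega> ^ n) ^ j" by (simp only: power_mult[symmetric] mult.commute)
      then show ?thesis unfolding lj_def by (simp add: power_mult_distrib wn)
    qed
    have sumk: "(\<Sum>j<n. lj j ^ k) = (if k = 0 then of_nat n else 0)" if "k < n" for k
    proof (cases "k = 0")
      case True then show ?thesis by simp
    next
      case False
      have e: "lj j ^ k = l ^ k * (\<omega> ^ k) ^ j" for j
      proof -
        have "(\<omega> ^ j) ^ k = (\<omega> ^ k) ^ j" by (simp only: power_mult[symmetric] mult.commute)
        then show ?thesis unfolding lj_def by (simp add: power_mult_distrib mult.commute)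
      qed
      have "(\<omega> ^ k) ^ n = (\<omega> ^ n) ^ k" by (simp only: power_mult[symmetric] mult.commute)
      then have "(\<omega> ^ k) ^ n = 1" using wn by simp
      then have "(\<Sum>j<n. (\<omega> ^ k) ^ j) = 0"
        using wk1[of k] False that by (subst geometric_sum) auto
      then show ?thesis using False by (simp add: e sum_distrib_left[symmetric])
    qed
    define T where "T = (\<Sum>j<n. R (m + lj j))"
    have A: "(\<Sum>j<n. \<Sum>k<n. cmult (lj j ^ k) (R m ^ Suc k)) = (\<Sum>k<n. cmult (\<Sum>j<n. lj j ^ k) (R m ^ Suc k))"
      by (subst sum.swap) (simp add: cm_suml)
    have B: "(\<Sum>j<n. cmult (lj j ^ n) (R m ^ n * R (m + lj j))) = cmult (l ^ n) (R m ^ n * T)"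
      unfolding T_def ljn by (simp add: sum_distrib_left cm_sumr)
    have C: "(\<Sum>k<n. cmult (\<Sum>j<n. lj j ^ k) (R m ^ Suc k)) = cmult (of_nat n) (R m)"
    proof -
      have "(\<Sum>k<n. cmult (\<Sum>j<n. lj j ^ k) (R m ^ Suc k))
          = (\<Sum>k\<in>{..<n}. if k = 0 then cmult (of_nat n) (R m ^ Suc k) else 0)"
        by (rule sum.cong[OF refl]) (simp add: sumk cm_zero)
      also have "\<dots> = cmult (of_nat n) (R m)" using n1 by (subst sum.delta) auto
      finally show ?thesis .
    qed
    have "T = (\<Sum>j<n. (\<Sum>k<n. cmult (lj j ^ k) (R m ^ Suc k)) + cmult (lj j ^ n) (R m ^ n * R (m + lj j)))"
      unfolding T_def by (rule sum.cong[OF refl]) (rule iter)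
    also have "\<dots> = cmult (of_nat n) (R m) + cmult (l ^ n) (R m ^ n * T)"
      by (simp only: sum.distrib A B C)
    finally have Teq: "T = cmult (of_nat n) (R m) + cmult (l ^ n) (R m ^ n * T)" .
    obtain n' where n': "n = Suc n'" using n1 by (cases n) auto
    have nTs: "norm T \<le> (\<Sum>j<n. norm (R (m + lj j)))" unfolding T_def by (rule norm_sum)
    have nT: "norm T \<le> norm (R (m + l)) + real n' * M"
    proof -
      have "(\<Sum>j<n. norm (R (m + lj j))) = norm (R (m + lj 0)) + (\<Sum>j<n'. norm (R (m + lj (Suc j))))"
        unfolding n' by (rule sum.lessThan_Suc_shift)
      also have "(\<Sum>j<n'. norm (R (m + lj (Suc j)))) \<le> of_nat (card {..<n'}) * M"
        by (rule sum_bounded_above) (rule Mmax)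
      finally show ?thesis using nTs by (simp add: lj_def)
    qed
    have nT2: "norm T \<le> real n * M"
    proof -
      have "(\<Sum>j<n. norm (R (m + lj j))) \<le> of_nat (card {..<n}) * M"
        by (rule sum_bounded_above) (rule Mmax)
      then show ?thesis using nTs by simp
    qed
    have Mn: "norm (R m ^ n) \<le> M ^ n" using norm_power_ineq[of "R m" n] hm by simp
    have "norm (cmult (l ^ n) (R m ^ n * T)) = cmod l ^ n * norm (R m ^ n * T)"
      by (simp add: cm_norm norm_power)
    also have "\<dots> \<le> cmod l ^ n * (M ^ n * (real n * M))"
    proof (rule mult_left_mono)
      have "norm (R m ^ n * T) \<le> norm (R m ^ n) * norm T" by (rule norm_mult_ineq)
      also have "\<dots> \<le> M ^ n * (real n * M)"
        by (rule mult_mono[OF Mn nT2]) (use Mpos in auto)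
      finally show "norm (R m ^ n * T) \<le> M ^ n * (real n * M)" .
    qed simp
    also have "\<dots> = real n * q ^ n * M" unfolding q_def by (simp add: power_mult_distrib)
    finally have E: "norm (cmult (l ^ n) (R m ^ n * T)) \<le> real n * q ^ n * M" .
    have "real n * M = norm (cmult (of_nat n) (R m))" by (simp add: cm_norm hm)
    also have "cmult (of_nat n) (R m) = T - cmult (l ^ n) (R m ^ n * T)"
      using Teq by (simp add: algebra_simps)
    also have "norm \<dots> \<le> norm T + norm (cmult (l ^ n) (R m ^ n * T))" by (rule norm_triangle_ineq4)
    finally have "real n * M \<le> norm (R (m + l)) + real n' * M + real n * q ^ n * M"
      using nT E by linarith
    then show False using nq' unfolding n' by (simp add: algebra_simps)
  qed
  define e where "e = 1 / (2 * M)"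
  have e0: "e > 0" and eM: "e * M < 1" using Mpos unfolding e_def by auto
  have propg: "norm (R (\<mu> + of_real (real k * e))) = M" for k
  proof (induction k)
    case 0 then show ?case by (simp add: M_def)
  next
    case (Suc k)
    have "norm (R ((\<mu> + of_real (real k * e)) + of_real e)) = M"
      by (rule key[OF Suc]) (use e0 eM in simp)
    then show ?case by (simp add: algebra_simps)
  qed
  obtain k where k: "cmod \<mu> + norm x + 1 / M < real k * e" using ex_less_of_nat_mult[OF e0] by blast
  define c where "c = \<mu> + of_real (real k * e)"
  have cm1: "cmod (complex_of_real (real k * e)) = real k * e"
    by (simp only: norm_of_real) (use e0 in simp)
  have cm2: "complex_of_real (real k * e) = c - \<mu>" unfolding c_def by simp
  have "cmod c \<ge> real k * e - cmod \<mu>"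
    using norm_triangle_ineq4[of c \<mu>] cm1 unfolding cm2 by linarith
  then have c1: "cmod c - norm x > 1 / M" using k by simp
  have "0 < 1 / M" using Mpos by simp
  then have "norm (R c) \<le> 1 / (cmod c - norm x)" using c1 by (intro decay) linarith
  also have "\<dots> < M"
  proof -
    have d0: "cmod c - norm x > 0" using c1 \<open>0 < 1 / M\<close> by linarith
    have "1 < M * (cmod c - norm x)" using c1 Mpos by (simp add: divide_less_eq mult.commute)
    then show ?thesis using d0 by (simp add: divide_less_eq mult.commute)
  qed
  finally show False using propg[of k] unfolding c_def by simp
qed
end


lemma uf_nbot: "ultrafilter_nat U \<Longrightarrow> U \<noteq> bot" unfolding ultrafilter_nat_def by blast
lemma uf_neg: "ultrafilter_nat U \<Longrightarrow> \<not> eventually P U \<Longrightarrow> eventually (\<lambda>n. \<not> P n) U"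
  unfolding ultrafilter_nat_def by blast
lemma uf_gt: assumes "ultrafilter_nat U" "nonprincipal U" shows "eventually (\<lambda>n. n > N) U"
proof -
  have "\<forall>k\<in>{..N}. eventually (\<lambda>n. n \<noteq> k) U"
    using assms uf_neg[of U "\<lambda>n. n = _"] unfolding nonprincipal_def by blast
  then have "eventually (\<lambda>n. \<forall>k\<in>{..N}. n \<noteq> k) U" by (rule eventually_ball_finite[rotated]) simp
  then show ?thesis by eventually_elim (auto simp: not_le[symmetric])
qed
lemma uf_ex: assumes "ultrafilter_nat U" "eventually P U" shows "\<exists>n. P n"
  using eventually_happens[OF assms(2)] uf_nbot[OF assms(1)] by blast

lemma linf_bound: "a \<in> linf \<Longrightarrow> \<exists>A. \<forall>n. norm (a n) \<le> A"
  unfolding linf_def by (auto simp: bounded_iff)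
lemma linf_I: "(\<And>n. norm (a n) \<le> A) \<Longrightarrow> a \<in> linf"
  unfolding linf_def bounded_iff by auto
lemma cU_I: "a \<in> linf \<Longrightarrow> eventually (\<lambda>n. a n = 0) U \<Longrightarrow> a \<in> cU U"
  unfolding cU_def by (auto intro!: tendsto_eventually elim: eventually_mono)
lemma not_cU: assumes "ultrafilter_nat U" "a \<in> linf" "a \<notin> cU U"
  shows "\<exists>\<epsilon>>0. eventually (\<lambda>n. norm (a n) \<ge> \<epsilon>) U"
proof -
  have "\<not> ((\<lambda>n. norm (a n)) \<longlongrightarrow> 0) U" using assms unfolding cU_def by auto
  moreover have "\<forall>l<0. eventually (\<lambda>n. l < norm (a n)) U"
  proof (intro allI impI)
    fix l :: real assume "l < 0"
    then show "eventually (\<lambda>n. l < norm (a n)) U"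
      by (intro always_eventually allI) (meson less_le_trans norm_ge_zero)
  qed
  ultimately obtain u where "u > 0" "\<not> eventually (\<lambda>n. norm (a n) < u) U"
    unfolding order_tendsto_iff by auto
  then have "eventually (\<lambda>n. \<not> norm (a n) < u) U" using uf_neg[OF assms(1)] by blast
  then show ?thesis using \<open>u > 0\<close> by (intro exI[of _ u]) (auto simp: not_less)
qed
lemma const_not_cU: assumes "ultrafilter_nat U" "x \<noteq> 0" shows "(\<lambda>n. x) \<notin> cU U"
proof
  assume "(\<lambda>n. x) \<in> cU U"
  then have "((\<lambda>n. norm x) \<longlongrightarrow> 0) U" unfolding cU_def by auto
  moreover have "((\<lambda>n. norm x) \<longlongrightarrow> norm x) U" by simp
  ultimately have "norm x = 0" using tendsto_unique uf_nbot[OF assms(1)] by blast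
  then show False using assms by simp
qed

lemma C_pi_le: "b * a * c = 1 \<Longrightarrow> C_pi a \<le> ereal (norm b * norm c)"
  unfolding C_pi_def by (rule INF_lower2[of "(b, c)"]) auto
lemma C_pi_lt: "C_pi a < ereal K \<Longrightarrow> \<exists>b c. b * a * c = 1 \<and> norm b * norm c < K"
  unfolding C_pi_def INF_less_iff by auto

lemma norm3: "norm (x * y * z) \<le> norm x * norm y * norm (z::'a::real_normed_algebra)"
  by (metis mult_right_mono norm_ge_zero norm_mult_ineq order_trans)

theorem proposition2p2:
  fixes U :: "nat filter"
    and cmult :: "complex \<Rightarrow> 'a::{real_normed_algebra_1,banach} \<Rightarrow> 'a"
  assumes "ultrafilter_nat U" and "nonprincipal U"
    and "complex_banach_algebra cmult"
    and "\<not> iso_to_complex cmult"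
  shows "ultrapower_purely_infinite U TYPE('a) \<longleftrightarrow>
         (\<exists>K>0. \<forall>a::'a. norm a = 1 \<longrightarrow> C_pi a < ereal K)"
proof
  assume PI: "ultrapower_purely_infinite U TYPE('a)"
  show "\<exists>K>0. \<forall>a::'a. norm a = 1 \<longrightarrow> C_pi a < ereal K"
  proof (rule ccontr)
    assume "\<not> ?thesis"
    then have ex: "\<forall>n::nat. \<exists>a::'a. norm a = 1 \<and> \<not> C_pi a < ereal (real n + 1)"
      by (metis add_nonneg_pos of_nat_0_le_iff zero_less_one)
    obtain a :: "nat \<Rightarrow> 'a" where a0: "\<forall>n. norm (a n) = 1 \<and> \<not> C_pi (a n) < ereal (real n + 1)"
      using choice[OF ex] by blast
    have a: "\<And>n. norm (a n) = 1" "\<And>n. \<not> C_pi (a n) < ereal (real n + 1)" using a0 by auto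
    have al: "a \<in> linf" by (rule linf_I[of _ 1]) (simp add: a)
    have anc: "a \<notin> cU U"
    proof
      assume "a \<in> cU U"
      then have "((\<lambda>n. norm (a n)) \<longlongrightarrow> 0) U" unfolding cU_def by auto
      then have "((\<lambda>n. 1::real) \<longlongrightarrow> 0) U" by (simp add: a)
      moreover have "((\<lambda>n. 1::real) \<longlongrightarrow> 1) U" by simp
      ultimately show False using tendsto_unique uf_nbot[OF assms(1)] by fastforce
    qed
    from PI al anc obtain b c where bl: "b \<in> linf" and cl: "c \<in> linf"
      and bac: "(\<lambda>n. b n * a n * c n - 1) \<in> cU U"
      unfolding ultrapower_purely_infinite_def by blast
    obtain B where B: "\<And>n. norm (b n) \<le> B" using linf_bound[OF bl] by blast
    obtain C where C: "\<And>n. norm (c n) \<le> C" using linf_bound[OF cl] by blast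
    have B0: "B \<ge> 0" using B[of 0] norm_ge_zero[of "b 0"] by linarith
    have C0: "C \<ge> 0" using C[of 0] norm_ge_zero[of "c 0"] by linarith
    have "((\<lambda>n. norm (b n * a n * c n - 1)) \<longlongrightarrow> 0) U" using bac unfolding cU_def by auto
    then have e1: "eventually (\<lambda>n. norm (b n * a n * c n - 1) < 1/2) U"
      by (rule order_tendstoD) simp
    have e2: "eventually (\<lambda>n. n > nat \<lceil>2 * B * C\<rceil>) U" by (rule uf_gt[OF assms(1,2)])
    obtain n where n1: "norm (b n * a n * c n - 1) < 1/2" and n2: "n > nat \<lceil>2 * B * C\<rceil>"
      using uf_ex[OF assms(1) eventually_conj[OF e1 e2]] by blast
    obtain w where w: "w * (b n * a n * c n) = 1" and wn: "norm w \<le> 1 / (1 - norm (b n * a n * c n - 1))"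
      using neumann'[of "b n * a n * c n"] n1 by auto
    have w2: "norm w \<le> 2"
    proof -
      have "1 / (1 - norm (b n * a n * c n - 1)) \<le> 2" using n1 by (simp add: divide_simps)
      then show ?thesis using wn by linarith
    qed
    have "(w * b n) * a n * c n = 1" using w by (simp add: mult.assoc)
    then have "C_pi (a n) \<le> ereal (norm (w * b n) * norm (c n))" by (rule C_pi_le)
    also have "norm (w * b n) * norm (c n) \<le> 2 * B * C"
    proof -
      have "norm (w * b n) \<le> 2 * B"
        using norm_mult_ineq[of w "b n"] mult_mono[OF w2 B[of n]] B0 by simp
      then have "norm (w * b n) * norm (c n) \<le> (2 * B) * C"
        by (rule mult_mono[OF _ C[of n]]) (use B0 in auto)
      then show ?thesis by simp
    qed
    also have "2 * B * C < real n + 1" using n2 by linarith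
    finally show False using a(2)[of n] by simp
  qed
next
  assume "\<exists>K>0. \<forall>a::'a. norm a = 1 \<longrightarrow> C_pi a < ereal K"
  then obtain K where K0: "K > 0" and HK: "\<And>a::'a. norm a = 1 \<Longrightarrow> C_pi a < ereal K" by blast
  have fact: "\<exists>b c. b * x * c = 1 \<and> norm b \<le> 1 \<and> norm c \<le> K / \<epsilon>"
    if "\<epsilon> > 0" "norm (x::'a) \<ge> \<epsilon>" for x \<epsilon>
  proof -
    have nx: "norm x > 0" using that by linarith
    define x1 where "x1 = scaleR (1 / norm x) x"
    have "norm x1 = 1" unfolding x1_def using nx by simp
    from C_pi_lt[OF HK[OF this]] obtain b0 c0 where bc: "b0 * x1 * c0 = 1" and lt: "norm b0 * norm c0 < K"
      by blast
    have b0: "b0 \<noteq> 0" using bc by auto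
    define b where "b = scaleR (1 / norm b0) b0"
    define c where "c = scaleR (norm b0 / norm x) c0"
    have "b * x * c = scaleR (1 / norm x) (b0 * x * c0)"
      unfolding b_def c_def using b0 by simp
    also have "\<dots> = b0 * x1 * c0" unfolding x1_def by simp
    finally have 1: "b * x * c = 1" using bc by simp
    have 2: "norm b \<le> 1" unfolding b_def using b0 by simp
    have "norm c = norm b0 * norm c0 / norm x" unfolding c_def using nx by simp
    also have "\<dots> \<le> K / norm x" using lt nx by (simp add: divide_right_mono)
    also have "\<dots> \<le> K / \<epsilon>" using that K0 by (simp add: frac_le)
    finally show ?thesis using 1 2 by blast
  qed
  show "ultrapower_purely_infinite U TYPE('a)"
    unfolding ultrapower_purely_infinite_def
  proof (intro conjI ballI impI)
    fix a :: "nat \<Rightarrow> 'a" assume al: "a \<in> linf" and anc: "a \<notin> cU U"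
    obtain \<epsilon> where e0: "\<epsilon> > 0" and ev: "eventually (\<lambda>n. norm (a n) \<ge> \<epsilon>) U"
      using not_cU[OF assms(1) al anc] by blast
    obtain A where A: "\<And>n. norm (a n) \<le> A" using linf_bound[OF al] by blast
    have exP: "\<forall>n. \<exists>p. norm (fst p) \<le> 1 \<and> norm (snd p) \<le> K / \<epsilon> \<and>
            (norm (a n) \<ge> \<epsilon> \<longrightarrow> fst p * a n * snd p = 1)"
    proof
      fix n show "\<exists>p. norm (fst p) \<le> 1 \<and> norm (snd p) \<le> K / \<epsilon> \<and>
            (norm (a n) \<ge> \<epsilon> \<longrightarrow> fst p * a n * snd p = 1)"
      proof (cases "norm (a n) \<ge> \<epsilon>")
        case True
        then obtain b c where "b * a n * c = 1 \<and> norm b \<le> 1 \<and> norm c \<le> K / \<epsilon>"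
          using fact[OF e0] by blast
        then show ?thesis by (intro exI[of _ "(b, c)"]) auto
      next
        case False then show ?thesis using K0 e0 by (intro exI[of _ "(0, 0)"]) auto
      qed
    qed
    obtain p :: "nat \<Rightarrow> 'a \<times> 'a" where p0: "\<forall>n. norm (fst (p n)) \<le> 1 \<and> norm (snd (p n)) \<le> K / \<epsilon> \<and>
            (norm (a n) \<ge> \<epsilon> \<longrightarrow> fst (p n) * a n * snd (p n) = 1)"
      using choice[OF exP] by blast
    have p: "\<And>n. norm (fst (p n)) \<le> 1" "\<And>n. norm (snd (p n)) \<le> K / \<epsilon>"
      "\<And>n. norm (a n) \<ge> \<epsilon> \<Longrightarrow> fst (p n) * a n * snd (p n) = 1"
      using p0 by auto
    define b where "b n = fst (p n)" for n
    define c where "c n = snd (p n)" for n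
    have bl: "b \<in> linf" by (rule linf_I[of _ 1]) (simp add: b_def p)
    have cl: "c \<in> linf" by (rule linf_I[of _ "K / \<epsilon>"]) (simp add: c_def p)
    have "(\<lambda>n. b n * a n * c n - 1) \<in> cU U"
    proof (rule cU_I)
      show "(\<lambda>n. b n * a n * c n - 1) \<in> linf"
      proof (rule linf_I)
        fix n
        have "norm (b n * a n * c n - 1) \<le> norm (b n * a n * c n) + norm (1::'a)"
          by (rule norm_triangle_ineq4)
        also have "norm (b n * a n * c n) \<le> norm (b n) * norm (a n) * norm (c n)" by (rule norm3)
        also have "\<dots> \<le> 1 * A * (K / \<epsilon>)"
          using p(1)[of n] p(2)[of n] A[of n] order_trans[OF norm_ge_zero A[of n]] unfolding b_def c_def
          by (intro mult_mono) auto
        finally show "norm (b n * a n * c n - 1) \<le> 1 * A * (K / \<epsilon>) + 1" by simp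
      qed
      show "eventually (\<lambda>n. b n * a n * c n - 1 = 0) U"
        using ev by eventually_elim (simp add: b_def c_def p(3))
    qed
    then show "\<exists>b\<in>linf. \<exists>c\<in>linf. (\<lambda>n. b n * a n * c n - 1) \<in> cU U" using bl cl by blast
  next
    show "\<not> ultrapower_division_algebra U TYPE('a)"
    proof
      assume D: "ultrapower_division_algebra U TYPE('a)"
      have inv: "\<exists>y. y * x = 1 \<and> x * y = 1" if x0: "x \<noteq> 0" for x :: 'a
      proof -
        have xl: "(\<lambda>n. x) \<in> linf" by (rule linf_I[of _ "norm x"]) simp
        from D xl const_not_cU[OF assms(1) x0] obtain b where
          r: "(\<lambda>n. x * b n - 1) \<in> cU U" and l: "(\<lambda>n. b n * x - 1) \<in> cU U"
          unfolding ultrapower_division_algebra_def by blast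
        have "((\<lambda>n. norm (x * b n - 1)) \<longlongrightarrow> 0) U" using r unfolding cU_def by auto
        then have e1: "eventually (\<lambda>n. norm (x * b n - 1) < 1) U" by (rule order_tendstoD) simp
        have "((\<lambda>n. norm (b n * x - 1)) \<longlongrightarrow> 0) U" using l unfolding cU_def by auto
        then have e2: "eventually (\<lambda>n. norm (b n * x - 1) < 1) U" by (rule order_tendstoD) simp
        obtain n where n1: "norm (x * b n - 1) < 1" and n2: "norm (b n * x - 1) < 1"
          using uf_ex[OF assms(1) eventually_conj[OF e1 e2]] by blast
        obtain w1 where w1: "(x * b n) * w1 = 1" using neumann'[OF n1] by blast
        obtain w2 where w2: "w2 * (b n * x) = 1" using neumann'[OF n2] by blast
        define r where "r = b n * w1"
        define l where "l = w2 * b n"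
        have xr: "x * r = 1" using w1 unfolding r_def by (simp add: mult.assoc)
        have lx: "l * x = 1" using w2 unfolding l_def by (simp add: mult.assoc)
        have "l = l * (x * r)" using xr by simp
        also have "\<dots> = r" using lx by (simp add: mult.assoc[symmetric])
        finally show ?thesis using xr lx by auto
      qed
      have all: "\<exists>c. x = cmult c 1" for x :: 'a by (rule GM[OF assms(3) inv])
      have uniq: "c = d" if "cmult c (1::'a) = cmult d 1" for c d
      proof -
        have "cmult (c - d) (1::'a) = 0" using that by (simp add: cm_diffl[OF assms(3)])
        then have "cmod (c - d) = 0" using cm_norm[OF assms(3), of "c - d" "1::'a"] by simp
        then show ?thesis by simp
      qed
      define \<phi> where "\<phi> x = (THE c. x = cmult c (1::'a))" for x
      have phi: "x = cmult (\<phi> x) 1" for x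
        unfolding \<phi>_def by (rule theI') (use all uniq in blast)
      have phic: "\<phi> (cmult c 1) = c" for c using phi[of "cmult c 1"] uniq by metis
      have "iso_to_complex cmult"
        unfolding iso_to_complex_def
      proof (intro exI[of _ \<phi>] conjI allI)
        show "bij \<phi>"
        proof (rule bijI)
          show "inj \<phi>"
          proof (rule injI)
            fix x y assume "\<phi> x = \<phi> y" then show "x = y" using phi[of x] phi[of y] by metis
          qed
          show "surj \<phi>" by (rule surjI[of \<phi> "\<lambda>c. cmult c 1"]) (rule phic)
        qed
        fix x y :: 'a and z :: complex
        have "x + y = cmult (\<phi> x + \<phi> y) 1"
          by (subst phi[of x], subst phi[of y]) (simp add: cm_addl[OF assms(3)])
        then show "\<phi> (x + y) = \<phi> x + \<phi> y" by (simp add: phic)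
        have "cmult z x = cmult (z * \<phi> x) 1" by (subst phi[of x]) (simp add: cm_assoc[OF assms(3)])
        then show "\<phi> (cmult z x) = z * \<phi> x" by (simp add: phic)
        have "x * y = cmult (\<phi> x * \<phi> y) 1"
          by (subst phi[of x], subst phi[of y]) (simp add: cm_assoc[OF assms(3)] cm_1l[OF assms(3)])
        then show "\<phi> (x * y) = \<phi> x * \<phi> y" by (simp add: phic)
      next
        show "\<phi> 1 = 1" using phic[of 1] by (simp add: cm_one[OF assms(3)])
      qed
      then show False using assms(4) by blast
    qed
  qed
qed

end
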